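(* Let $\mathbf m\in\mathcal M$, $z_0\in\mathbb C\setminus\operatorname{supp}\mathbf m$ with $u:=G_{\mathbf m}(z_0)\ne0$, and $c\in\mathbb R$. Then the set $\{z\in\mathbb C\setminus\operatorname{supp}\mathbf m:\operatorname{Re}\mathcal S_u(z)>c\}$ has exactly one unbounded connected component, and likewise $\{z\in\mathbb C\setminus\operatorname{supp}\mathbf m:\operatorname{Re}\mathcal S_u(z)<c\}$ has exactly one unbounded connected component.
   Context: $\mathcal M$ is the set of compactly supported Borel probability measures on $\mathbb R$; $G_{\mathbf m}(z)=\int\frac{d\mathbf m(x)}{z-x}$. For $u\ne0$, $\operatorname{Re}\mathcal S_u(z)=\operatorname{Re}(zu)-\int\log|z-x|\,d\mathbf m(x)-\log|u|$ (the real part of $\mathcal S_u(z)=zu-\int\log(z-x)d\mathbf m(x)-\log u$). *)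

theory Defs
  imports "HOL-Probability.Probability"
begin

definition msupp :: "real measure \<Rightarrow> real set" where
  "msupp m = {x. \<forall>e>0. emeasure m (ball x e) \<noteq> 0}"

definition cs_prob :: "real measure \<Rightarrow> bool" where
  "cs_prob m \<longleftrightarrow> prob_space m \<and> sets m = sets borel \<and> compact (msupp m)"

definition cauchy_G :: "real measure \<Rightarrow> complex \<Rightarrow> complex" where
  "cauchy_G m z = (LINT x|m. 1 / (z - complex_of_real x))"

text \<open>Real part of S_u(z) = z u - int log(z - x) dm(x) - log u.\<close>
definition ReS :: "real measure \<Rightarrow> complex \<Rightarrow> complex \<Rightarrow> real" where
  "ReS m u z = Re (z * u) - (LINT x|m. ln (cmod (z - complex_of_real x))) - ln (cmod u)"

end

theory Submission
  imports Defs
begin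

lemma supp_AE:
  assumes "sets m = sets borel"
  shows "AE x in m. x \<in> msupp m"
proof -
  define I where "I = {(q::real,r::real). q \<in> \<rat> \<and> r \<in> \<rat> \<and> r > 0 \<and> emeasure m (ball q r) = 0}"
  have cI: "countable I"
  proof -
    have "I \<subseteq> \<rat> \<times> \<rat>" unfolding I_def by auto
    thus ?thesis using countable_rat by (meson countable_SIGMA countable_subset)
  qed
  have "(\<Union>i\<in>I. ball (fst i) (snd i)) \<in> null_sets m"
    by (rule null_sets_UN'[OF cI]) (auto simp: I_def null_sets_def assms)
  moreover have "{x \<in> space m. \<not> x \<in> msupp m} \<subseteq> (\<Union>i\<in>I. ball (fst i) (snd i))"
  proof
    fix x assume "x \<in> {x \<in> space m. \<not> x \<in> msupp m}"
    then obtain e where e: "e > 0" "emeasure m (ball x e) = 0" unfolding msupp_def by auto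
    obtain q where q: "q \<in> \<rat>" "x - e/3 < q" "q < x + e/3"
      using Rats_dense_in_real[of "x - e/3" "x + e/3"] e by auto
    obtain r where r: "r \<in> \<rat>" "e/3 < r" "r < 2*e/3"
      using Rats_dense_in_real[of "e/3" "2*e/3"] e by auto
    have sub: "ball q r \<subseteq> ball x e" using q r by (auto simp: dist_real_def)
    have "emeasure m (ball q r) \<le> emeasure m (ball x e)"
      by (rule emeasure_mono[OF sub]) (simp add: assms)
    hence "emeasure m (ball q r) = 0" using e by simp
    hence "(q,r) \<in> I" using q r e unfolding I_def by auto
    moreover have "x \<in> ball q r" using q r by (auto simp: dist_real_def)
    ultimately show "x \<in> (\<Union>i\<in>I. ball (fst i) (snd i))" by force
  qed
  ultimately show ?thesis by (rule AE_I')
qed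

lemma ln_meas:
  assumes "sets m = sets borel"
  shows "(\<lambda>x. ln (cmod (z - complex_of_real x))) \<in> borel_measurable m"
proof -
  have "(\<lambda>x. ln (cmod (z - complex_of_real x))) \<in> borel_measurable borel" by measurable
  thus ?thesis using measurable_cong_sets[OF assms refl] by blast
qed

lemma L_int:
  assumes P: "prob_space m" and S: "sets m = sets borel" and AE: "AE x in m. \<bar>x\<bar> \<le> M"
    and z: "cmod z > M"
  shows "integrable m (\<lambda>x. ln (cmod (z - complex_of_real x)))"
    and "ln (cmod z - M) \<le> (LINT x|m. ln (cmod (z - complex_of_real x)))"
    and "(LINT x|m. ln (cmod (z - complex_of_real x))) \<le> ln (cmod z + M)"
proof -
  interpret prob_space m by fact
  have b: "AE x in m. ln (cmod z - M) \<le> ln (cmod (z - complex_of_real x)) \<and> ln (cmod (z - complex_of_real x)) \<le> ln (cmod z + M)"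
    using AE
  proof eventually_elim
    case (elim x)
    have 1: "cmod (z - complex_of_real x) \<ge> cmod z - M"
      using norm_triangle_ineq2[of z "complex_of_real x"] elim by auto
    have 2: "cmod (z - complex_of_real x) \<le> cmod z + M"
      using norm_triangle_ineq4[of z "complex_of_real x"] elim by auto
    have p: "cmod (z - complex_of_real x) > 0" using 1 z by auto
    show ?case using 1 2 z p by (simp add: ln_le_cancel_iff)
  qed
  show I: "integrable m (\<lambda>x. ln (cmod (z - complex_of_real x)))"
  proof (rule integrable_const_bound[where B="max \<bar>ln (cmod z - M)\<bar> \<bar>ln (cmod z + M)\<bar>"])
    show "AE x in m. norm (ln (cmod (z - complex_of_real x))) \<le> max \<bar>ln (cmod z - M)\<bar> \<bar>ln (cmod z + M)\<bar>"
      using b by eventually_elim auto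
  qed (rule ln_meas[OF S])
  have "(LINT x|m. ln (cmod z - M)) \<le> (LINT x|m. ln (cmod (z - complex_of_real x)))"
    by (rule integral_mono_AE[OF _ I]) (use b in auto)
  thus "ln (cmod z - M) \<le> (LINT x|m. ln (cmod (z - complex_of_real x)))" by (simp add: prob_space)
  have "(LINT x|m. ln (cmod (z - complex_of_real x))) \<le> (LINT x|m. ln (cmod z + M))"
    by (rule integral_mono_AE[OF I]) (use b in auto)
  thus "(LINT x|m. ln (cmod (z - complex_of_real x))) \<le> ln (cmod z + M)" by (simp add: prob_space)
qed

lemma L_step:
  assumes P: "prob_space m" and S: "sets m = sets borel" and AE: "AE x in m. \<bar>x\<bar> \<le> M"
    and z: "cmod z > M" and z2: "cmod (z + of_real t * d) > M" and d: "cmod d = 1" and t: "t \<ge> 0"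
  shows "(LINT x|m. ln (cmod (z + of_real t * d - complex_of_real x))) - (LINT x|m. ln (cmod (z - complex_of_real x))) \<le> t / (cmod z - M)"
proof -
  interpret prob_space m by fact
  have I1: "integrable m (\<lambda>x. ln (cmod (z - complex_of_real x)))" by (rule L_int[OF P S AE z])
  have I2: "integrable m (\<lambda>x. ln (cmod (z + of_real t * d - complex_of_real x)))" by (rule L_int[OF P S AE z2])
  have b: "AE x in m. ln (cmod (z + of_real t * d - complex_of_real x)) - ln (cmod (z - complex_of_real x)) \<le> t / (cmod z - M)"
    using AE
  proof eventually_elim
    case (elim x)
    define A where "A = cmod (z - complex_of_real x)"
    define B where "B = cmod (z + of_real t * d - complex_of_real x)"
    have A1: "A \<ge> cmod z - M"
      using norm_triangle_ineq2[of z "complex_of_real x"] elim unfolding A_def by auto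
    have B1: "B \<ge> cmod (z + of_real t * d) - M"
      using norm_triangle_ineq2[of "z + of_real t * d" "complex_of_real x"] elim unfolding B_def by auto
    have B2: "B \<le> A + t"
    proof -
      have "B = cmod ((z - complex_of_real x) + of_real t * d)" unfolding B_def by (simp add: algebra_simps)
      also have "\<dots> \<le> A + cmod (of_real t * d)" unfolding A_def by (rule norm_triangle_ineq)
      also have "cmod (of_real t * d) = t" using d t by (simp add: norm_mult)
      finally show ?thesis .
    qed
    have Ap: "A > 0" using A1 z by auto
    have Bp: "B > 0" using B1 z2 by auto
    have "ln B - ln A = ln (B / A)" using Ap Bp by (simp add: ln_div)
    also have "\<dots> \<le> B / A - 1" using Ap Bp by (intro ln_le_minus_one) simp
    also have "\<dots> = (B - A) / A" using Ap by (simp add: field_simps)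
    also have "\<dots> \<le> t / A" using B2 Ap by (intro divide_right_mono) auto
    also have "\<dots> \<le> t / (cmod z - M)" using A1 Ap z t by (intro divide_left_mono) auto
    finally show ?case unfolding A_def B_def .
  qed
  have "(LINT x|m. ln (cmod (z + of_real t * d - complex_of_real x))) - (LINT x|m. ln (cmod (z - complex_of_real x)))
     = (LINT x|m. ln (cmod (z + of_real t * d - complex_of_real x)) - ln (cmod (z - complex_of_real x)))"
    using I1 I2 by simp
  also have "\<dots> \<le> (LINT x|m. t / (cmod z - M))"
    by (rule integral_mono_AE[OF _ _ b]) (use I1 I2 in auto)
  finally show ?thesis by (simp add: prob_space)
qed

lemma growth:
  fixes a K k :: real
  assumes a: "a > 0" and K: "K \<ge> 0"
  shows "\<exists>N\<ge>1. \<forall>s\<ge>N. a * s - ln (s + K) > k"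
proof -
  define N where "N = max 1 ((2/a) * (\<bar>k\<bar> + a*K/2 + \<bar>ln (a/2)\<bar>) + 1)"
  have "\<forall>s\<ge>N. a * s - ln (s + K) > k"
  proof (intro allI impI)
    fix s assume s: "s \<ge> N"
    have s1: "s \<ge> 1" using s unfolding N_def by auto
    have pos: "(a/2) * (s + K) > 0" using a s1 K by auto
    have "ln ((a/2) * (s + K)) \<le> (a/2) * (s + K) - 1" by (rule ln_le_minus_one[OF pos])
    moreover have "ln ((a/2) * (s + K)) = ln (a/2) + ln (s + K)"
      by (rule ln_mult_pos) (use a s1 K in auto)
    ultimately have l: "ln (s + K) \<le> (a/2) * (s + K) - 1 - ln (a/2)" by linarith
    have "s \<ge> (2/a) * (\<bar>k\<bar> + a*K/2 + \<bar>ln (a/2)\<bar>) + 1" using s unfolding N_def by auto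
    hence "(a/2) * s \<ge> (a/2) * ((2/a) * (\<bar>k\<bar> + a*K/2 + \<bar>ln (a/2)\<bar>) + 1)"
      using a by (intro mult_left_mono) auto
    also have "(a/2) * ((2/a) * (\<bar>k\<bar> + a*K/2 + \<bar>ln (a/2)\<bar>) + 1) = \<bar>k\<bar> + a*K/2 + \<bar>ln (a/2)\<bar> + a/2"
      using a by (simp add: field_simps)
    finally have "(a/2) * s \<ge> \<bar>k\<bar> + a*K/2 + \<bar>ln (a/2)\<bar> + a/2" .
    moreover have "(a/2) * (s + K) = (a/2) * s + a*K/2" by (simp add: algebra_simps)
    moreover have "\<bar>k\<bar> \<ge> k" "\<bar>ln (a/2)\<bar> \<ge> - ln (a/2)" by auto
    ultimately show "a * s - ln (s + K) > k" using l a by linarith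
  qed
  moreover have "N \<ge> 1" unfolding N_def by auto
  ultimately show ?thesis by blast
qed

lemma cmod_ge_Re: "cmod w \<ge> \<bar>Re w\<bar>" by (rule abs_Re_le_cmod)
lemma cmod_ge_Im: "cmod w \<ge> \<bar>Im w\<bar>" by (rule abs_Im_le_cmod)
lemma cmod_le_ReIm: "cmod w \<le> \<bar>Re w\<bar> + \<bar>Im w\<bar>" by (rule cmod_le)

lemma cmod_shift_mono:
  assumes "\<bar>Re v\<bar> \<ge> \<bar>Re w\<bar>" "Im v = Im w"
  shows "cmod w \<le> cmod v"
proof -
  have "(Re w)^2 \<le> (Re v)^2" using assms(1) abs_le_square_iff by blast
  thus ?thesis unfolding cmod_def using assms(2) by (intro real_sqrt_le_mono) simp
qed

lemma right_case:
  fixes g :: "complex \<Rightarrow> real" and a M k :: real and Q :: "complex set"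
  assumes a: "a > 0" and M: "M \<ge> 0" and Q: "\<And>w. cmod w > M \<Longrightarrow> w \<in> Q"
    and H1: "\<And>w. cmod w > M \<Longrightarrow> ln (cmod w - M) \<le> g w \<and> g w \<le> ln (cmod w + M)"
    and H2: "\<And>w t. cmod w > M \<Longrightarrow> cmod (w + of_real t) > M \<Longrightarrow> t \<ge> 0 \<Longrightarrow> g (w + of_real t) - g w \<le> t / (cmod w - M)"
  shows "\<exists>R p. p \<in> {w. w \<in> Q \<and> a * Re w - g w > k} \<and>
    (\<forall>w\<in>{w. w \<in> Q \<and> a * Re w - g w > k}. cmod w \<ge> R \<longrightarrow> connected_component {w. w \<in> Q \<and> a * Re w - g w > k} p w)
    \<and> (\<forall>r. \<exists>w\<in>{w. w \<in> Q \<and> a * Re w - g w > k}. cmod w \<ge> r)"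
proof -
  define T where "T = {w. w \<in> Q \<and> a * Re w - g w > k}"
  define R0 where "R0 = M + 1/a + 1"
  have ainv: "1/a > 0" using a by simp
  have R0M: "R0 > M + 1/a" "R0 \<ge> M + 1" unfolding R0_def using a by auto
  have stp: "t / (r - M) \<le> a * t" if "r \<ge> R0" "t \<ge> 0" for r t
  proof -
    have "r - M > 1/a" using that R0M by auto
    hence "a * (r - M) > a * (1/a)" using a by (intro mult_strict_left_mono) auto
    hence "a * (r - M) > 1" using a by simp
    moreover have rM: "r - M > 0" using \<open>r - M > 1/a\<close> ainv by linarith
    ultimately have "1/(r - M) \<le> a" by (subst pos_divide_le_eq[OF rM]) (simp add: mult.commute)
    hence "t * (1/(r - M)) \<le> t * a" using that by (intro mult_left_mono) auto
    thus ?thesis by (simp add: mult.commute)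
  qed
  define R where "R = R0 + exp \<bar>k\<bar>"
  have RR0: "R \<ge> R0" unfolding R_def by auto
  obtain N where N: "N \<ge> 1" "\<forall>s\<ge>N. a * s - ln (s + M) > k" using growth[OF a M] by blast
  have V: "w \<in> T" if "Re w \<ge> R0" "\<bar>Im w\<bar> \<le> Y" "a * Re w - ln (Re w + (Y + M)) > k" for w Y
  proof -
    have w1: "cmod w > M" using cmod_ge_Re[of w] that R0M ainv by linarith
    have w2: "cmod w \<le> Re w + Y" using cmod_le_ReIm[of w] that R0M M ainv by linarith
    have "g w \<le> ln (cmod w + M)" using H1[OF w1] by simp
    also have "\<dots> \<le> ln (Re w + (Y + M))" using w1 w2 M by (subst ln_le_cancel_iff) auto
    finally show ?thesis using that Q[OF w1] unfolding T_def by auto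
  qed
  define P where "P = max R0 N"
  have realpt: "of_real s \<in> T" if "s \<ge> P" for s
    using that N by (intro V[of _ 0]) (auto simp: P_def)
  have A: "Re w > 0" if "w \<in> T" "cmod w \<ge> R" for w
  proof -
    have w1: "cmod w > M" using that RR0 R0M ainv by linarith
    have "R - M > 0" using RR0 R0M ainv by linarith
    hence "ln (cmod w - M) \<ge> ln (R - M)" using that w1
      by (subst ln_le_cancel_iff) auto
    moreover have "ln (R - M) \<ge> - k"
    proof -
      have "exp (-k) \<le> exp \<bar>k\<bar>" by simp
      hence "R - M \<ge> exp (-k)" unfolding R_def R0_def using ainv by linarith
      hence "ln (R - M) \<ge> ln (exp (-k))" using \<open>R - M > 0\<close> by (subst ln_le_cancel_iff) auto
      thus ?thesis by simp
    qed
    ultimately have "a * Re w > 0" using that H1[OF w1] unfolding T_def by auto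
    thus ?thesis using a by (simp add: zero_less_mult_iff)
  qed
  have B: "w + of_real t \<in> T" if "w \<in> T" "cmod w \<ge> R0" "Re w \<ge> 0" "t \<ge> 0" for w t
  proof -
    have m: "cmod w \<le> cmod (w + of_real t)" using that by (intro cmod_shift_mono) auto
    have w1: "cmod w > M" using that R0M ainv by linarith
    have w2: "cmod (w + of_real t) > M" using m w1 by auto
    have "g (w + of_real t) - g w \<le> a * t"
      using H2[OF w1 w2 that(4)] stp[OF that(2) that(4)] by linarith
    thus ?thesis using that w2 Q unfolding T_def by (auto simp: algebra_simps)
  qed
  have main: "connected_component T (of_real P) w" if w: "w \<in> T" "cmod w \<ge> R" for w
  proof -
    define x where "x = Re w"
    define y where "y = Im w"
    have x0: "x > 0" using A[OF w] unfolding x_def .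
    obtain N2 where N2: "N2 \<ge> 1" "\<forall>s\<ge>N2. a * s - ln (s + (\<bar>y\<bar> + M)) > k"
      using growth[OF a, of "\<bar>y\<bar> + M" k] M by auto
    define X where "X = max (max x P) N2"
    have XP: "X \<ge> P" "X \<ge> x" "X \<ge> N2" "X \<ge> R0" unfolding X_def P_def by auto
    have c1: "connected_component T w (Complex X y)"
    proof (rule connected_componentI)
      let ?K = "(\<lambda>t. w + of_real t) ` {0..X - x}"
      show "connected ?K"
        by (intro connected_continuous_image connected_Icc continuous_intros)
      show "?K \<subseteq> T"
      proof
        fix v assume "v \<in> ?K"
        then obtain t where t: "t \<in> {0..X - x}" "v = w + of_real t" by blast
        have "w + of_real t \<in> T" using w RR0 x0 unfolding x_def by (intro B[OF w(1)]) (use t in auto)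
        thus "v \<in> T" using t by simp
      qed
      show "w \<in> ?K" using XP by (auto intro!: image_eqI[where x=0])
      show "Complex X y \<in> ?K" using XP
        by (auto intro!: image_eqI[where x="X - x"] simp: complex_eq_iff x_def y_def)
    qed
    have c2: "connected_component T (Complex X y) (of_real X)"
    proof (rule connected_componentI)
      let ?K = "(\<lambda>s. of_real X + \<i> * of_real (s * y)) ` {0..1}"
      show "connected ?K"
        by (intro connected_continuous_image connected_Icc continuous_intros)
      show "?K \<subseteq> T"
      proof
        fix v assume "v \<in> ?K"
        then obtain s where s: "s \<in> {0..1}" "v = of_real X + \<i> * of_real (s * y)" by auto
        have "\<bar>s * y\<bar> \<le> \<bar>y\<bar>" using s by (simp add: abs_mult mult_left_le_one_le)
        thus "v \<in> T" using s XP N2 by (intro V[of _ "\<bar>y\<bar>"]) auto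
      qed
      show "Complex X y \<in> ?K"
        by (auto intro!: image_eqI[where x=1] simp: complex_eq_iff)
      show "of_real X \<in> ?K"
        by (auto intro!: image_eqI[where x=0] simp: complex_eq_iff)
    qed
    have c3: "connected_component T (of_real X) (of_real P)"
    proof (rule connected_componentI)
      let ?K = "(\<lambda>s. of_real s :: complex) ` {P..X}"
      show "connected ?K"
        by (intro connected_continuous_image connected_Icc continuous_intros)
      show "?K \<subseteq> T" using realpt by auto
      show "of_real X \<in> ?K" using XP by auto
      show "of_real P \<in> ?K" using XP by auto
    qed
    have "connected_component T w (of_real P)"
      by (rule connected_component_trans[OF c1 connected_component_trans[OF c2 c3]])
    thus ?thesis by (rule connected_component_sym)
  qed
  have unb: "\<exists>w\<in>T. cmod w \<ge> r" for r
    using realpt[of "max P r"] by (intro bexI[of _ "of_real (max P r)"]) auto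
  have "of_real P \<in> T" by (rule realpt) simp
  hence "of_real P \<in> T \<and> (\<forall>w\<in>T. cmod w \<ge> R \<longrightarrow> connected_component T (of_real P) w) \<and> (\<forall>r. \<exists>w\<in>T. cmod w \<ge> r)"
    using main unb by blast
  note X = this[unfolded T_def]
  show ?thesis
    apply (rule exI[of _ R], rule exI[of _ "of_real P"])
    by (fact X)
qed


lemma left_case:
  fixes g :: "complex \<Rightarrow> real" and a M k :: real and Q :: "complex set"
  assumes a: "a > 0" and M: "M \<ge> 0" and Q: "\<And>w. cmod w > M \<Longrightarrow> w \<in> Q"
    and H1: "\<And>w. cmod w > M \<Longrightarrow> ln (cmod w - M) \<le> g w \<and> g w \<le> ln (cmod w + M)"
    and H2: "\<And>w t. cmod w > M \<Longrightarrow> cmod (w + of_real t) > M \<Longrightarrow> t \<ge> 0 \<Longrightarrow> g (w + of_real t) - g w \<le> t / (cmod w - M)"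
  shows "\<exists>R p. p \<in> {w. w \<in> Q \<and> a * Re w - g w < k} \<and>
    (\<forall>w\<in>{w. w \<in> Q \<and> a * Re w - g w < k}. cmod w \<ge> R \<longrightarrow> connected_component {w. w \<in> Q \<and> a * Re w - g w < k} p w)
    \<and> (\<forall>r. \<exists>w\<in>{w. w \<in> Q \<and> a * Re w - g w < k}. cmod w \<ge> r)"
proof -
  define T where "T = {w. w \<in> Q \<and> a * Re w - g w < k}"
  define R0 where "R0 = M + 1/a + 1"
  have ainv: "1/a > 0" using a by simp
  have R0M: "R0 > M + 1/a" "R0 \<ge> M + 1" unfolding R0_def using a by auto
  have stp: "t / (r - M) \<le> a * t" if "r \<ge> R0" "t \<ge> 0" for r t
  proof -
    have "r - M > 1/a" using that R0M by auto
    hence "a * (r - M) > a * (1/a)" using a by (intro mult_strict_left_mono) auto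
    hence "a * (r - M) > 1" using a by simp
    moreover have rM: "r - M > 0" using \<open>r - M > 1/a\<close> ainv by linarith
    ultimately have "1/(r - M) \<le> a" by (subst pos_divide_le_eq[OF rM]) (simp add: mult.commute)
    hence "t * (1/(r - M)) \<le> t * a" using that by (intro mult_left_mono) auto
    thus ?thesis by (simp add: mult.commute)
  qed
  obtain N where N: "N \<ge> 1" "\<forall>s\<ge>N. a * s - ln (s + M) > k + a * R0" using growth[OF a M] by blast
  define R where "R = max R0 N"
  have RR0: "R \<ge> R0" "R \<ge> N" unfolding R_def by auto
  have A: "\<bar>Im w\<bar> \<ge> R0" if "w \<in> T" "cmod w \<ge> R" "Re w > 0" for w
  proof (rule ccontr)
    assume "\<not> \<bar>Im w\<bar> \<ge> R0"
    hence i: "\<bar>Im w\<bar> < R0" by simp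
    have w1: "cmod w > M" using that RR0 R0M ainv by linarith
    have "cmod w \<le> Re w + \<bar>Im w\<bar>" using cmod_le_ReIm[of w] that by simp
    hence r: "Re w > cmod w - R0" using i by linarith
    have "a * Re w < k + ln (cmod w + M)" using that H1[OF w1] unfolding T_def by auto
    moreover have "a * Re w \<ge> a * (cmod w - R0)" using r a by (intro mult_left_mono) auto
    ultimately have "a * cmod w - ln (cmod w + M) < k + a * R0" by (simp add: algebra_simps)
    moreover have "cmod w \<ge> N" using that RR0 by linarith
    ultimately show False using N(2) by force
  qed
  have B: "w - of_real t \<in> T" if "w \<in> T" "cmod w > M" "t \<ge> 0" "cmod (w - of_real t) \<ge> R0" for w t
  proof -
    define v where "v = w - of_real t"
    have v1: "cmod v > M" using that R0M ainv unfolding v_def by linarith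
    have "g (v + of_real t) - g v \<le> t / (cmod v - M)"
      using H2[OF v1 _ that(3)] that(2) unfolding v_def by simp
    also have "\<dots> \<le> a * t" using stp[OF _ that(3)] that(4) unfolding v_def by simp
    finally have "g w - g v \<le> a * t" unfolding v_def by simp
    thus ?thesis using that Q[OF v1] unfolding T_def v_def[symmetric] by (auto simp: v_def algebra_simps)
  qed
  have V: "w \<in> T" if "Re w = - X" "X \<ge> R0" "X \<ge> \<bar>k\<bar>/a + 1" for w X
  proof -
    have w1: "cmod w \<ge> X" using cmod_ge_Re[of w] that by simp
    hence w2: "cmod w > M" using that R0M ainv by linarith
    have "cmod w - M \<ge> 1" using w1 that R0M by linarith
    hence "ln (cmod w - M) \<ge> 0" by simp
    hence g0: "g w \<ge> 0" using H1[OF w2] by linarith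
    have "a * X \<ge> a * (\<bar>k\<bar>/a + 1)" using that a by (intro mult_left_mono) auto
    also have "a * (\<bar>k\<bar>/a + 1) = \<bar>k\<bar> + a" using a by (simp add: field_simps)
    finally have "a * X \<ge> \<bar>k\<bar> + a" .
    hence "a * Re w - g w < k" using that g0 a by auto
    thus ?thesis using Q[OF w2] unfolding T_def by auto
  qed
  define P where "P = max R0 (\<bar>k\<bar>/a + 1)"
  have realpt: "of_real (-s) \<in> T" if "s \<ge> P" for s
    using that by (intro V[of _ s]) (auto simp: P_def)
  have main: "connected_component T (of_real (-P)) w" if w: "w \<in> T" "cmod w \<ge> R" for w
  proof -
    define x where "x = Re w"
    define y where "y = Im w"
    define X where "X = max P \<bar>x\<bar>"
    have XP: "X \<ge> P" "X \<ge> \<bar>x\<bar>" "X \<ge> R0" "X \<ge> \<bar>k\<bar>/a + 1" unfolding X_def P_def by auto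
    have wM: "cmod w > M" using w RR0 R0M ainv by linarith
    have c1: "connected_component T w (Complex (-X) y)"
    proof (rule connected_componentI)
      let ?K = "(\<lambda>t. w - of_real t) ` {0..X + x}"
      show "connected ?K"
        by (intro connected_continuous_image connected_Icc continuous_intros)
      show "?K \<subseteq> T"
      proof
        fix v assume "v \<in> ?K"
        then obtain t where t: "t \<in> {0..X + x}" "v = w - of_real t" by blast
        have "cmod (w - of_real t) \<ge> R0"
        proof (cases "x \<le> 0")
          case True
          have "cmod w \<le> cmod (w - of_real t)" using True t unfolding x_def
            by (intro cmod_shift_mono) auto
          thus ?thesis using w RR0 by linarith
        next
          case False
          have "\<bar>Im w\<bar> \<ge> R0" using A[OF w] False unfolding x_def by simp
          thus ?thesis using cmod_ge_Im[of "w - of_real t"] by simp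
        qed
        hence "w - of_real t \<in> T" using t by (intro B[OF w(1) wM]) auto
        thus "v \<in> T" using t by simp
      qed
      show "w \<in> ?K" using XP by (auto intro!: image_eqI[where x=0])
      show "Complex (-X) y \<in> ?K" using XP
        by (auto intro!: image_eqI[where x="X + x"] simp: complex_eq_iff x_def y_def)
    qed
    have c2: "connected_component T (Complex (-X) y) (of_real (-X))"
    proof (rule connected_componentI)
      let ?K = "(\<lambda>s. of_real (-X) + \<i> * of_real (s * y)) ` {0..1}"
      show "connected ?K"
        by (intro connected_continuous_image connected_Icc continuous_intros)
      show "?K \<subseteq> T"
      proof
        fix v assume "v \<in> ?K"
        then obtain s where s: "v = of_real (-X) + \<i> * of_real (s * y)" by auto
        show "v \<in> T" using s XP by (intro V[of _ X]) auto
      qed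
      show "Complex (-X) y \<in> ?K"
        by (auto intro!: image_eqI[where x=1] simp: complex_eq_iff)
      show "of_real (-X) \<in> ?K"
        by (auto intro!: image_eqI[where x=0] simp: complex_eq_iff)
    qed
    have c3: "connected_component T (of_real (-X)) (of_real (-P))"
    proof (rule connected_componentI)
      let ?K = "(\<lambda>s. of_real (-s) :: complex) ` {P..X}"
      show "connected ?K"
        by (intro connected_continuous_image connected_Icc continuous_intros)
      show "?K \<subseteq> T" using realpt by auto
      show "of_real (-X) \<in> ?K" using XP by auto
      show "of_real (-P) \<in> ?K" using XP by auto
    qed
    have "connected_component T w (of_real (-P))"
      by (rule connected_component_trans[OF c1 connected_component_trans[OF c2 c3]])
    thus ?thesis by (rule connected_component_sym)
  qed
  have unb: "\<exists>w\<in>T. cmod w \<ge> r" for r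
    using realpt[of "max P r"] by (intro bexI[of _ "of_real (- max P r)"]) auto
  have "of_real (-P) \<in> T" by (rule realpt) simp
  hence "of_real (-P) \<in> T \<and> (\<forall>w\<in>T. cmod w \<ge> R \<longrightarrow> connected_component T (of_real (-P)) w) \<and> (\<forall>r. \<exists>w\<in>T. cmod w \<ge> r)"
    using main unb by blast
  note X = this[unfolded T_def]
  show ?thesis
    apply (rule exI[of _ R], rule exI[of _ "of_real (-P)"])
    by (fact X)
qed

lemma uniq_unbounded:
  fixes S :: "complex set"
  assumes p: "p \<in> S" and cc: "\<forall>z\<in>S. cmod z \<ge> R \<longrightarrow> connected_component S p z"
    and unb: "\<forall>r. \<exists>z\<in>S. cmod z \<ge> r"
  shows "\<exists>!C. C \<in> components S \<and> \<not> bounded C"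
proof (rule ex1I[of _ "connected_component_set S p"])
  show "connected_component_set S p \<in> components S \<and> \<not> bounded (connected_component_set S p)"
  proof
    show "connected_component_set S p \<in> components S" by (rule componentsI[OF p])
    show "\<not> bounded (connected_component_set S p)"
    proof
      assume "bounded (connected_component_set S p)"
      then obtain B where B: "\<forall>z\<in>connected_component_set S p. norm z \<le> B" by (auto simp: bounded_iff)
      obtain z where z: "z \<in> S" "cmod z \<ge> max R (B + 1)" using unb by blast
      have "connected_component S p z" using cc z by auto
      hence "norm z \<le> B" using B by auto
      thus False using z by auto
    qed
  qed
next
  fix C assume C: "C \<in> components S \<and> \<not> bounded C"
  then obtain q where q: "q \<in> S" "C = connected_component_set S q" by (auto simp: components_iff)
  obtain z where z: "z \<in> C" "cmod z > R"
  proof -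
    have "\<not> (\<forall>z\<in>C. norm z \<le> R)" using C by (auto simp: bounded_iff)
    thus ?thesis using that by force
  qed
  have zS: "z \<in> S" using z q connected_component_in by blast
  have "connected_component S p z" using cc zS z by auto
  hence e1: "connected_component_set S z = connected_component_set S p"
    by (intro connected_component_eq) simp
  have e2: "connected_component_set S z = connected_component_set S q"
    using z q by (intro connected_component_eq) simp
  show "C = connected_component_set S p" using e1 e2 q by simp
qed

lemma transfer:
  fixes d :: complex and S T :: "complex set"
  assumes d: "d * cnj d = 1" and ST: "\<And>z. z \<in> S \<longleftrightarrow> z * cnj d \<in> T"
    and H: "\<exists>R p. p \<in> T \<and> (\<forall>w\<in>T. cmod w \<ge> R \<longrightarrow> connected_component T p w) \<and> (\<forall>r. \<exists>w\<in>T. cmod w \<ge> r)"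
  shows "\<exists>!C. C \<in> components S \<and> \<not> bounded C"
proof -
  obtain R p where p: "p \<in> T" and cc: "\<forall>w\<in>T. cmod w \<ge> R \<longrightarrow> connected_component T p w"
    and unb: "\<forall>r. \<exists>w\<in>T. cmod w \<ge> r" using H by blast
  have nd: "cmod d = 1"
  proof -
    have "complex_of_real ((cmod d)^2) = 1" using d complex_norm_square[of d] by simp
    hence "(cmod d)^2 = 1" by (metis of_real_eq_1_iff)
    thus ?thesis using norm_ge_zero[of d] by (auto simp: power2_eq_1_iff)
  qed
  have backd: "w * d * cnj d = w" for w using d by (simp add: mult.assoc)
  have inS: "w * d \<in> S" if "w \<in> T" for w unfolding ST backd using that .
  have ccS: "connected_component S (p * d) (w * d)" if cw: "connected_component T p w" for w
  proof -
    obtain K where K: "connected K" "K \<subseteq> T" "p \<in> K" "w \<in> K"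
      using cw unfolding connected_component_def by blast
    show ?thesis
    proof (rule connected_componentI)
      show "connected ((\<lambda>v. v * d) ` K)"
        by (rule connected_continuous_image[OF _ K(1)]) (intro continuous_intros)
      show "(\<lambda>v. v * d) ` K \<subseteq> S"
      proof
        fix v assume "v \<in> (\<lambda>v. v * d) ` K"
        then obtain k where k: "k \<in> K" "v = k * d" by blast
        have "k * d \<in> S" using k(1) K(2) by (intro inS) blast
        thus "v \<in> S" using k(2) by simp
      qed
      show "p * d \<in> (\<lambda>v. v * d) ` K" by (rule imageI[OF K(3)])
      show "w * d \<in> (\<lambda>v. v * d) ` K" by (rule imageI[OF K(4)])
    qed
  qed
  show ?thesis
  proof (rule uniq_unbounded[of "p * d" S R])
    show "p * d \<in> S" by (rule inS[OF p])
    show "\<forall>z\<in>S. cmod z \<ge> R \<longrightarrow> connected_component S (p * d) z"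
    proof (intro ballI impI)
      fix z assume z: "z \<in> S" "cmod z \<ge> R"
      have w: "z * cnj d \<in> T" using ST z by simp
      have "cmod (z * cnj d) = cmod z" using nd by (simp add: norm_mult)
      hence "connected_component T p (z * cnj d)" using cc w z by auto
      hence "connected_component S (p * d) (z * cnj d * d)" by (rule ccS)
      moreover have "z * cnj d * d = z" using d by (simp add: mult.assoc mult.commute[of "cnj d"])
      ultimately show "connected_component S (p * d) z" by simp
    qed
    show "\<forall>r. \<exists>z\<in>S. cmod z \<ge> r"
    proof
      fix r
      obtain w where w: "w \<in> T" "cmod w \<ge> r" using unb by blast
      have "cmod (w * d) = cmod w" using nd by (simp add: norm_mult)
      hence "cmod (w * d) \<ge> r" using w(2) by simp
      thus "\<exists>z\<in>S. cmod z \<ge> r" using inS[OF w(1)] by blast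
    qed
  qed
qed

theorem proposition3p4:
  fixes m :: "real measure" and z0 :: complex and c :: real
  assumes "cs_prob m"
    and "z0 \<notin> complex_of_real ` msupp m"
    and "cauchy_G m z0 \<noteq> 0"
  shows "(\<exists>!C. C \<in> components {z. z \<notin> complex_of_real ` msupp m \<and> ReS m (cauchy_G m z0) z > c}
               \<and> \<not> bounded C)
         \<and> (\<exists>!C. C \<in> components {z. z \<notin> complex_of_real ` msupp m \<and> ReS m (cauchy_G m z0) z < c}
               \<and> \<not> bounded C)"
proof -
  have P: "prob_space m" and S: "sets m = sets borel" and cpt: "compact (msupp m)"
    using assms(1) unfolding cs_prob_def by auto
  obtain M0 where M0: "\<forall>x\<in>msupp m. norm x \<le> M0"
    using compact_imp_bounded[OF cpt] unfolding bounded_iff by blast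
  define M where "M = max M0 0"
  have M: "M \<ge> 0" unfolding M_def by simp
  have suppM: "\<bar>x\<bar> \<le> M" if "x \<in> msupp m" for x using M0 that unfolding M_def by force
  have AE: "AE x in m. \<bar>x\<bar> \<le> M" using supp_AE[OF S] by eventually_elim (rule suppM)
  define u where "u = cauchy_G m z0"
  define a where "a = cmod u"
  have a: "a > 0" using assms(3) unfolding a_def u_def by simp
  define d where "d = cnj u / complex_of_real a"
  have du: "d * u = complex_of_real a"
  proof -
    have "cnj u * u = complex_of_real (a^2)" unfolding a_def using complex_norm_square[of u]
      by (simp add: mult.commute)
    thus ?thesis unfolding d_def using a by (simp add: power2_eq_square field_simps)
  qed
  have dd: "d * cnj d = 1"
  proof -
    have "d * cnj d = (cnj u * u) / complex_of_real (a^2)" unfolding d_def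
      by (simp add: power2_eq_square mult.commute)
    also have "cnj u * u = complex_of_real (a^2)" unfolding a_def using complex_norm_square[of u]
      by (simp add: mult.commute)
    finally show ?thesis using a by simp
  qed
  have nd: "cmod d = 1"
  proof -
    have "complex_of_real ((cmod d)^2) = 1" using dd complex_norm_square[of d] by simp
    hence "(cmod d)^2 = 1" by (metis of_real_eq_1_iff)
    thus ?thesis using norm_ge_zero[of d] by (auto simp: power2_eq_1_iff)
  qed
  define L where "L z = (LINT x|m. ln (cmod (z - complex_of_real x)))" for z
  define g where "g w = L (w * d)" for w
  define Q where "Q = {w. w * d \<notin> complex_of_real ` msupp m}"
  have nwd: "cmod (w * d) = cmod w" for w using nd by (simp add: norm_mult)
  have Qh: "w \<in> Q" if "cmod w > M" for w
  proof -
    have "w * d \<notin> complex_of_real ` msupp m"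
    proof
      assume "w * d \<in> complex_of_real ` msupp m"
      then obtain x where "x \<in> msupp m" "w * d = complex_of_real x" by blast
      hence "cmod w \<le> M" using suppM nwd[of w] by (metis norm_of_real)
      thus False using that by simp
    qed
    thus ?thesis unfolding Q_def by simp
  qed
  have H1: "ln (cmod w - M) \<le> g w \<and> g w \<le> ln (cmod w + M)" if "cmod w > M" for w
    using L_int(2,3)[OF P S AE, of "w * d"] that nwd[of w] unfolding g_def L_def by simp
  have H2: "g (w + of_real t) - g w \<le> t / (cmod w - M)"
    if "cmod w > M" "cmod (w + of_real t) > M" "t \<ge> 0" for w t
  proof -
    have e: "(w + of_real t) * d = w * d + of_real t * d" by (simp add: algebra_simps)
    show ?thesis
      using L_step[OF P S AE, of "w * d" t d] that nd nwd[of w] nwd[of "w + of_real t"]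
      unfolding g_def L_def e by simp
  qed
  have ReSw: "ReS m u (w * d) = a * Re w - g w - ln a" for w
  proof -
    have "w * d * u = w * complex_of_real a" using du by (simp add: mult.assoc)
    hence "Re (w * d * u) = Re (w * complex_of_real a)" by (simp only:)
    also have "\<dots> = a * Re w" by simp
    finally have "Re (w * d * u) = a * Re w" .
    thus ?thesis unfolding ReS_def g_def L_def a_def by simp
  qed
  have backd: "z * cnj d * d = z" for z using dd by (simp add: mult.assoc mult.commute[of "cnj d"])
  have memQ: "z \<notin> complex_of_real ` msupp m \<longleftrightarrow> z * cnj d \<in> Q" for z
    by (simp only: Q_def mem_Collect_eq backd)
  have ReSz: "ReS m u z = a * Re (z * cnj d) - g (z * cnj d) - ln a" for z
    using ReSw[of "z * cnj d"] unfolding backd .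
  have part1: "\<exists>!C. C \<in> components {z. z \<notin> complex_of_real ` msupp m \<and> ReS m u z > c} \<and> \<not> bounded C"
  proof (rule transfer[OF dd])
    show "\<exists>R p. p \<in> {w. w \<in> Q \<and> a * Re w - g w > c + ln a} \<and>
      (\<forall>w\<in>{w. w \<in> Q \<and> a * Re w - g w > c + ln a}. cmod w \<ge> R \<longrightarrow> connected_component {w. w \<in> Q \<and> a * Re w - g w > c + ln a} p w)
      \<and> (\<forall>r. \<exists>w\<in>{w. w \<in> Q \<and> a * Re w - g w > c + ln a}. cmod w \<ge> r)"
      by (rule right_case[OF a M Qh H1 H2])
    show "z \<in> {z. z \<notin> complex_of_real ` msupp m \<and> ReS m u z > c} \<longleftrightarrow>
          z * cnj d \<in> {w. w \<in> Q \<and> a * Re w - g w > c + ln a}" for z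
      using memQ[of z] ReSz[of z] by auto
  qed
  have part2: "\<exists>!C. C \<in> components {z. z \<notin> complex_of_real ` msupp m \<and> ReS m u z < c} \<and> \<not> bounded C"
  proof (rule transfer[OF dd])
    show "\<exists>R p. p \<in> {w. w \<in> Q \<and> a * Re w - g w < c + ln a} \<and>
      (\<forall>w\<in>{w. w \<in> Q \<and> a * Re w - g w < c + ln a}. cmod w \<ge> R \<longrightarrow> connected_component {w. w \<in> Q \<and> a * Re w - g w < c + ln a} p w)
      \<and> (\<forall>r. \<exists>w\<in>{w. w \<in> Q \<and> a * Re w - g w < c + ln a}. cmod w \<ge> r)"
      by (rule left_case[OF a M Qh H1 H2])
    show "z \<in> {z. z \<notin> complex_of_real ` msupp m \<and> ReS m u z < c} \<longleftrightarrow>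
          z * cnj d \<in> {w. w \<in> Q \<and> a * Re w - g w < c + ln a}" for z
      using memQ[of z] ReSz[of z] by auto
  qed
  show ?thesis using part1 part2 unfolding u_def by blast
qed

end
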